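(* Let $G$ be an $n\times n$ Game of Primes grid (defined in the context) with update map $F$, and let $s_0, s_1, s_2,\dots$ be its sequence of days, where $s_0$ is the configuration in which every cell is dormant and $s_{t+1}=F(s_t)$ for all $t\ge 0$. Let $S=\{s_t : t\ge 0\}$ be the set of all distinct days that occur. Then for every day $k$, there are at most two days $a\in S$ with $F(a)=k$.
   Context: A Game of Primes (GOPM) grid of dimension $n$ is an $n\times n$ grid whose cells are filled with the $n^2$ natural numbers $a, a+d, a+2d,\dots,a+(n^2-1)d$ (for fixed integers $a\ge 1$, $d\ge 1$) in snake-like (boustrophedon) order: the first row is filled left to right starting with $a$ in the top-left cell, the second row right to left, the third row left to right, and so on. Two distinct cells are neighbors if they are adjacent horizontally, vertically or diagonally (so each cell has at most 8 neighbors, a corner cell exactly 3). Each cell is in one of two states, excited or dormant. A configuration ("day") is an assignment of a state to every cell. For a configuration $s$ and a cell $c$, let $N_s(c)$ be the number of neighbors of $c$ that contain a prime number or are excited in $s$ (or both). The update map $F$ sends $s$ to the configuration $F(s)$ in which: a cell $c$ dormant in $s$ is excited in $F(s)$ iff $N_s(c)\ge 3$; a cell $c$ excited in $s$ is dormant in $F(s)$ iff $N_s(c)\ge 4$ or $N_s(c)=0$, and otherwise remains excited. Day $0$ is the configuration with all cells dormant, and day $t+1$ is $F$ applied to day $t$. *)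

theory Defs
  imports "HOL-Computational_Algebra.Primes"
begin

text \<open>Cells of the n x n grid are pairs (i, j) with i the row (0-based, top row 0)
  and j the column (0-based, leftmost column 0).  A configuration is a predicate
  on cells: True = excited, False = dormant.  Configurations are kept dormant
  outside the grid, so that equality of configurations is equality on the grid.\<close>

type_synonym cell = "nat \<times> nat"
type_synonym config = "cell \<Rightarrow> bool"

definition in_grid :: "nat \<Rightarrow> cell \<Rightarrow> bool" where
  "in_grid n c \<longleftrightarrow> fst c < n \<and> snd c < n"

text \<open>Snake (boustrophedon) filling: row i is filled left to right if i is even,
  right to left if i is odd; the k-th cell in filling order (k = 0, 1, ...) holds a + k d.\<close>
definition gopm_value :: "nat \<Rightarrow> nat \<Rightarrow> nat \<Rightarrow> cell \<Rightarrow> nat" where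
  "gopm_value n a d c =
     (let i = fst c; j = snd c;
          k = (if even i then i * n + j else i * n + (n - 1 - j))
      in a + k * d)"

definition neighbor :: "nat \<Rightarrow> cell \<Rightarrow> cell \<Rightarrow> bool" where
  "neighbor n c c' \<longleftrightarrow> in_grid n c' \<and> c' \<noteq> c \<and>
     \<bar>int (fst c') - int (fst c)\<bar> \<le> 1 \<and> \<bar>int (snd c') - int (snd c)\<bar> \<le> 1"

definition active_nbrs :: "nat \<Rightarrow> nat \<Rightarrow> nat \<Rightarrow> config \<Rightarrow> cell \<Rightarrow> nat" where
  "active_nbrs n a d s c =
     card {c'. neighbor n c c' \<and> (prime (gopm_value n a d c') \<or> s c')}"

definition gopm_step :: "nat \<Rightarrow> nat \<Rightarrow> nat \<Rightarrow> config \<Rightarrow> config" where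
  "gopm_step n a d s c =
     (in_grid n c \<and>
       (let N = active_nbrs n a d s c in
        if s c then \<not> (N \<ge> 4 \<or> N = 0) else N \<ge> 3))"

definition gopm_day :: "nat \<Rightarrow> nat \<Rightarrow> nat \<Rightarrow> nat \<Rightarrow> config" where
  "gopm_day n a d t = (gopm_step n a d ^^ t) (\<lambda>_. False)"

end

theory Submission
  imports Defs
begin

lemma orb_shift:
  fixes f :: "'a \<Rightarrow> 'a"
  assumes "(f ^^ i) x0 = (f ^^ j) x0"
  shows "(f ^^ (i + u)) x0 = (f ^^ (j + u)) x0"
proof -
  have "(f ^^ (i + u)) x0 = (f ^^ u) ((f ^^ i) x0)" by (simp only: add.commute[of i u] funpow_add o_apply)
  also have "\<dots> = (f ^^ u) ((f ^^ j) x0)" using assms by simp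
  also have "\<dots> = (f ^^ (j + u)) x0" by (simp only: add.commute[of j u] funpow_add o_apply)
  finally show ?thesis .
qed

lemma orb_per:
  fixes f :: "'a \<Rightarrow> 'a"
  assumes "(f ^^ i) x0 = (f ^^ (i + p)) x0"
  shows "(f ^^ (i + u + c * p)) x0 = (f ^^ (i + u)) x0"
proof (induction c)
  case 0 then show ?case by simp
next
  case (Suc c)
  have "(f ^^ (i + (u + c * p))) x0 = (f ^^ (i + p + (u + c * p))) x0"
    by (rule orb_shift[OF assms])
  then have "(f ^^ (i + u + Suc c * p)) x0 = (f ^^ (i + u + c * p)) x0"
    by (simp add: algebra_simps)
  with Suc show ?case by simp
qed

lemma orb_mod:
  fixes f :: "'a \<Rightarrow> 'a"
  assumes "(f ^^ i) x0 = (f ^^ (i + p)) x0"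
  shows "(f ^^ (i + u)) x0 = (f ^^ (i + u mod p)) x0"
proof -
  have "u = u mod p + (u div p) * p" by simp
  then have "(f ^^ (i + u)) x0 = (f ^^ (i + u mod p + (u div p) * p)) x0"
    by (metis add.assoc)
  also have "\<dots> = (f ^^ (i + u mod p)) x0" by (rule orb_per[OF assms])
  finally show ?thesis .
qed

lemma orbit_preimages:
  fixes f :: "'a \<Rightarrow> 'a"
  shows "finite {x \<in> range (\<lambda>t. (f ^^ t) x0). f x = k}
       \<and> card {x \<in> range (\<lambda>t. (f ^^ t) x0). f x = k} \<le> 2"
proof -
  define s where "s = (\<lambda>t. (f ^^ t) x0)"
  have sS: "s (Suc t) = f (s t)" for t by (simp add: s_def)
  let ?A = "{x \<in> range s. f x = k}"
  have "\<exists>a b. ?A \<subseteq> {a, b}"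
  proof (cases "\<exists>t. s (Suc t) = k")
    case False
    then have "?A = {}" using sS by auto
    then show ?thesis by blast
  next
    case True
    define m where "m = (LEAST t. s (Suc t) = k)"
    have m: "s (Suc m) = k" unfolding m_def by (rule LeastI_ex[OF True])
    have mle: "s (Suc t) = k \<Longrightarrow> m \<le> t" for t unfolding m_def by (rule Least_le)
    show ?thesis
    proof (cases "\<exists>t. m < t \<and> s (Suc t) = k")
      case False
      have "?A \<subseteq> {s m}"
      proof
        fix x assume "x \<in> ?A"
        then obtain t where x: "x = s t" "s (Suc t) = k" using sS by auto
        with mle[OF x(2)] False have "t = m" by (cases "t = m") auto
        with x show "x \<in> {s m}" by simp
      qed
      then show ?thesis by blast
    next
      case True
      define q where "q = (LEAST t. m < t \<and> s (Suc t) = k)"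
      have q0: "m < q \<and> s (Suc q) = k" unfolding q_def by (rule LeastI_ex[OF True])
      then have q: "m < q" "s (Suc q) = k" by simp_all
      have qle: "m < t \<Longrightarrow> s (Suc t) = k \<Longrightarrow> q \<le> t" for t unfolding q_def
        by (rule Least_le) simp
      define p where "p = q - m"
      have pp: "p > 0" using q by (simp add: p_def)
      have per: "(f ^^ (Suc m)) x0 = (f ^^ (Suc m + p)) x0"
        using q m by (simp add: s_def p_def)
      have "?A \<subseteq> {s m, s q}"
      proof
        fix x assume "x \<in> ?A"
        then obtain t where x: "x = s t" "s (Suc t) = k" using sS by auto
        show "x \<in> {s m, s q}"
        proof (cases "t = m")
          case True with x show ?thesis by simp
        next
          case False
          with mle[OF x(2)] have tm: "m < t" by simp
          define u where "u = t - Suc m"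
          have tu: "t = Suc m + u" using tm by (simp add: u_def)
          define r where "r = u mod p"
          have rp: "r < p" using pp by (simp add: r_def)
          have st: "s t = s (Suc m + r)"
            using orb_mod[OF per, of u] tu by (simp add: s_def r_def)
          show ?thesis
          proof (cases "Suc r < p")
            case True
            have "Suc u mod p = Suc r" using True by (simp add: r_def mod_Suc)
            then have "s (Suc (Suc m + r)) = s (Suc t)"
              using orb_mod[OF per, of "Suc u"] tu by (simp add: s_def)
            with x(2) have "s (Suc (Suc m + r)) = k" by simp
            from qle[OF _ this] have "q \<le> Suc m + r" by simp
            with True show ?thesis by (simp add: p_def)
          next
            case False
            then have "Suc m + r = q" using rp q by (simp add: p_def)
            with st x show ?thesis by simp
          qed
        qed
      qed
      then show ?thesis by blast
    qed
  qed
  then obtain a b where ab: "?A \<subseteq> {a, b}" by blast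
  have "finite ?A" by (rule finite_subset[OF ab]) simp
  moreover have "card ?A \<le> card {a, b}" by (rule card_mono[OF _ ab]) simp
  moreover have "card {a, b} \<le> 2" by (simp add: card_insert_if)
  ultimately show ?thesis unfolding s_def by simp
qed

theorem theorem4p1:
  fixes n a d :: nat and k :: config
  assumes "a \<ge> 1" and "d \<ge> 1"
  shows "finite {x \<in> range (gopm_day n a d). gopm_step n a d x = k}
       \<and> card {x \<in> range (gopm_day n a d). gopm_step n a d x = k} \<le> 2"
proof -
  have "gopm_day n a d = (\<lambda>t. (gopm_step n a d ^^ t) (\<lambda>_. False))"
    by (simp add: fun_eq_iff gopm_day_def)
  then show ?thesis using orbit_preimages[of "gopm_step n a d" "\<lambda>_. False" k] by simp
qed

end
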